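(* Let $q$ be a prime power, $m>1$ an integer, and $k\ge 1$ an integer. For $1\le i\le k$, let $\gamma_i\in \mathbf{F}_{q^m}$ and let $L_i(x)\in \mathbf{F}_q[x]$ and $B(x)\in\mathbf{F}_q[x]$ be linearized polynomials. Let $h_i(x)\in \mathbf{F}_{q^m}[x]$ be such that $h_i(B(\mathbf{F}_{q^m}))\subseteq \mathbf{F}_q$ for each $i$. Then $$F(x):=\sum_{i=1}^k\bigl(L_i(x)+\gamma_i\bigr)h_i(B(x))$$ is a permutation polynomial of $\mathbf{F}_{q^m}$ if and only if both of the following hold: (1) the polynomial $\sum_{i=1}^k\bigl(L_i(x)+B(\gamma_i)\bigr)h_i(x)$ permutes the set $B(\mathbf{F}_{q^m})$; (2) for every $y\in B(\mathbf{F}_{q^m})$, an element $x\in\mathbf{F}_{q^m}$ satisfies both $\sum_{i=1}^k L_i(x)h_i(y)=0$ and $B(x)=0$ if and only if $x=0$.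
   Context: A linearized polynomial over a field $K\supseteq\mathbf{F}_q$ (here with coefficients in $\mathbf{F}_q$) is a polynomial of the form $\sum_{i=0}^{m-1}a_i x^{q^i}$. For a polynomial $g$ and $S\subseteq\mathbf{F}_{q^m}$, $g(S)=\{g(s):s\in S\}$. A polynomial $f\in\mathbf{F}_{q^m}[x]$ is a permutation polynomial of $\mathbf{F}_{q^m}$ if $x\mapsto f(x)$ is a bijection of $\mathbf{F}_{q^m}$; a polynomial permutes a set $S$ if it maps $S$ bijectively onto $S$. *)

theory Defs
  imports "HOL-Computational_Algebra.Computational_Algebra"
begin

text \<open>We model F_{q^m} as a finite field type 'a with CARD('a) = q^m; the
subfield F_q is the fixed field of the Frobenius x \<mapsto> x^q.\<close>

definition prime_power :: "nat \<Rightarrow> bool" where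
  "prime_power q \<longleftrightarrow> (\<exists>p n. prime p \<and> n > 0 \<and> q = p ^ n)"

definition subfield_Fq :: "nat \<Rightarrow> 'a::field set" where
  "subfield_Fq q = {x. x ^ q = x}"

definition linearized :: "nat \<Rightarrow> nat \<Rightarrow> 'a::field poly \<Rightarrow> bool" where
  "linearized q m L \<longleftrightarrow>
     (\<exists>a :: nat \<Rightarrow> 'a. (\<forall>i<m. a i \<in> subfield_Fq q) \<and>
        L = (\<Sum>i<m. monom (a i) (q ^ i)))"

definition permutation_polynomial :: "'a::field poly \<Rightarrow> bool" where
  "permutation_polynomial f \<longleftrightarrow> bij (poly f)"

definition permutes_set :: "'a::field poly \<Rightarrow> 'a set \<Rightarrow> bool" where
  "permutes_set g S \<longleftrightarrow> bij_betw (poly g) S S"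

end

theory Submission
  imports Defs "HOL-Number_Theory.Residues"
begin

lemma char_frob:
  fixes q m :: nat
  assumes "prime_power q" "card (UNIV :: 'a::{finite,field} set) = q ^ m" "m > 0"
  shows "\<forall>x y :: 'a. (x + y) ^ q = x ^ q + y ^ q"
proof -
  obtain p n where p: "prime p" "n > 0" "q = p ^ n" using assms(1) unfolding prime_power_def by blast
  have cp: "prime CHAR('a)" using prime_CHAR_semidom[of] finite_imp_CHAR_pos[where 'a='a] by auto
  have "CHAR('a) dvd p ^ (n * m)" using CHAR_dvd_CARD[where 'a='a] assms(2) p(3)
    by (simp add: power_mult)
  hence "CHAR('a) dvd p" using cp prime_dvd_power by blast
  hence "CHAR('a) = p" using cp p(1) by (simp add: primes_dvd_imp_eq)
  thus ?thesis using freshmans_dream'[OF cp] p(3) by blast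
qed

context
  fixes q :: nat
  assumes FR: "\<forall>x y :: 'a::field. (x + y) ^ q = x ^ q + y ^ q"
    and qpos: "q > 0"
begin

lemma frob_pow_add: "((x::'a) + y) ^ (q ^ i) = x ^ (q ^ i) + y ^ (q ^ i)"
proof (induction i arbitrary: x y)
  case 0 then show ?case by simp
next
  case (Suc i)
  have "(x + y) ^ (q ^ Suc i) = ((x + y) ^ q) ^ (q ^ i)" by (simp add: power_mult)
  also have "\<dots> = (x ^ q + y ^ q) ^ (q ^ i)" using FR by simp
  also have "\<dots> = x ^ (q ^ Suc i) + y ^ (q ^ Suc i)" using Suc by (simp add: power_mult)
  finally show ?case .
qed

lemma frob_pow_sum: "(sum (f :: 'b \<Rightarrow> 'a) S) ^ (q ^ i) = (\<Sum>j\<in>S. f j ^ (q ^ i))"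
  by (induction S rule: infinite_finite_induct) (auto simp: frob_pow_add qpos)

lemma fixed_pow: "(c::'a) ^ q = c \<Longrightarrow> c ^ (q ^ i) = c"
  by (induction i) (auto simp: power_mult)

lemma lin_add: "linearized q m L \<Longrightarrow> poly L ((x::'a) + y) = poly L x + poly L y"
  unfolding linearized_def
  by (auto simp: poly_sum poly_monom frob_pow_add distrib_left sum.distrib)

lemma lin_smul: "linearized q m L \<Longrightarrow> c \<in> subfield_Fq q \<Longrightarrow> poly L ((c::'a) * x) = c * poly L x"
  unfolding linearized_def subfield_Fq_def
  by (auto simp: poly_sum poly_monom power_mult_distrib fixed_pow sum_distrib_left mult_ac)

lemma lin_zero: "linearized q m L \<Longrightarrow> poly L (0::'a) = 0"
  using lin_add[of m L 0 0] by (metis add_cancel_right_right)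

lemma lin_sum: "linearized q m L \<Longrightarrow> poly L (sum (f::'b \<Rightarrow> 'a) S) = (\<Sum>j\<in>S. poly L (f j))"
  by (induction S rule: infinite_finite_induct) (auto simp: lin_zero lin_add)

lemma lin_frob: "linearized q m B \<Longrightarrow> poly B ((x::'a) ^ (q ^ i)) = (poly B x) ^ (q ^ i)"
proof -
  assume "linearized q m B"
  then obtain b where b: "\<forall>j<m. b j \<in> subfield_Fq q" "B = (\<Sum>j<m. Polynomial.monom (b j) (q ^ j))"
    unfolding linearized_def by blast
  have "(poly B x) ^ (q ^ i) = (\<Sum>j<m. (b j * x ^ q ^ j) ^ (q ^ i))"
    by (simp add: b(2) poly_sum poly_monom frob_pow_sum)
  also have "\<dots> = (\<Sum>j<m. b j * (x ^ q ^ i) ^ q ^ j)"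
    apply (rule sum.cong[OF refl])
    using b(1) unfolding subfield_Fq_def
    by (auto simp: power_mult_distrib fixed_pow simp flip: power_mult intro: arg_cong[where f="\<lambda>e. x ^ e"] mult.commute)
  also have "\<dots> = poly B (x ^ (q ^ i))" by (simp add: b(2) poly_sum poly_monom)
  finally show ?thesis by simp
qed

lemma lin_comm:
  assumes "linearized q m L" "linearized q m B"
  shows "poly B (poly L (x::'a)) = poly L (poly B x)"
proof -
  obtain a where a: "\<forall>j<m. a j \<in> subfield_Fq q" "L = (\<Sum>j<m. Polynomial.monom (a j) (q ^ j))"
    using assms(1) unfolding linearized_def by blast
  have "poly B (poly L x) = (\<Sum>j<m. poly B (a j * x ^ q ^ j))"
    unfolding a(2) poly_sum poly_monom by (rule lin_sum[OF assms(2)])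
  also have "\<dots> = (\<Sum>j<m. a j * (poly B x) ^ q ^ j)"
  proof (rule sum.cong[OF refl])
    fix j assume "j \<in> {..<m}"
    hence "a j \<in> subfield_Fq q" using a(1) by simp
    thus "poly B (a j * x ^ q ^ j) = a j * (poly B x) ^ q ^ j"
      using lin_smul[OF assms(2)] lin_frob[OF assms(2)] by simp
  qed
  also have "\<dots> = poly L (poly B x)" by (simp add: a(2) poly_sum poly_monom)
  finally show ?thesis .
qed

end


theorem theorem2p1:
  fixes q m k :: nat
    and \<gamma> :: "nat \<Rightarrow> 'a::{finite,field}"
    and L h :: "nat \<Rightarrow> 'a poly"
    and B :: "'a poly"
  assumes "prime_power q"
    and "card (UNIV :: 'a set) = q ^ m"
    and "m > 1"
    and "k \<ge> 1"
    and "\<forall>i\<in>{1..k}. linearized q m (L i)"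
    and "linearized q m B"
    and "\<forall>i\<in>{1..k}. poly (h i) ` (poly B ` UNIV) \<subseteq> subfield_Fq q"
  shows "permutation_polynomial
           (\<Sum>i\<in>{1..k}. (L i + [:\<gamma> i:]) * pcompose (h i) B)
         \<longleftrightarrow>
         (permutes_set (\<Sum>i\<in>{1..k}. (L i + [:poly B (\<gamma> i):]) * h i) (poly B ` UNIV)
          \<and> (\<forall>y\<in>poly B ` UNIV. \<forall>x.
               ((\<Sum>i\<in>{1..k}. poly (L i) x * poly (h i) y) = 0 \<and> poly B x = 0)
               \<longleftrightarrow> x = 0))"
proof -
  have FR: "\<forall>x y :: 'a. (x + y) ^ q = x ^ q + y ^ q"
    using char_frob[OF assms(1,2)] assms(3) by simp
  have qpos: "q > 0" using assms(1) unfolding prime_power_def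
    by (auto simp: prime_gt_0_nat)
  note Ladd = lin_add[OF FR qpos] and Lsm = lin_smul[OF FR qpos]
    and Lz = lin_zero[OF FR qpos] and Lc = lin_comm[OF FR qpos]
  define F where "F = (\<Sum>i\<in>{1..k}. (L i + [:\<gamma> i:]) * pcompose (h i) B)"
  define G where "G = (\<Sum>i\<in>{1..k}. (L i + [:poly B (\<gamma> i):]) * h i)"
  define S where "S = poly B ` UNIV"
  define D where "D = (\<lambda>y x. \<Sum>i\<in>{1..k}. poly (L i) x * poly (h i) y)"
  have pF: "poly F x = (\<Sum>i\<in>{1..k}. (poly (L i) x + \<gamma> i) * poly (h i) (poly B x))" for x
    by (simp add: F_def poly_sum poly_pcompose)
  have pG: "poly G y = (\<Sum>i\<in>{1..k}. (poly (L i) y + poly B (\<gamma> i)) * poly (h i) y)" for y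
    by (simp add: G_def poly_sum)
  have hF: "poly (h i) (poly B x) \<in> subfield_Fq q" if "i \<in> {1..k}" for i x
    using assms(7) that by blast
  have key1: "poly B (poly F x) = poly G (poly B x)" for x
  proof -
    have "poly B (poly F x) = (\<Sum>i\<in>{1..k}. poly B ((poly (L i) x + \<gamma> i) * poly (h i) (poly B x)))"
      unfolding pF by (rule lin_sum[OF FR qpos assms(6)])
    also have "\<dots> = poly G (poly B x)" unfolding pG
    proof (rule sum.cong[OF refl])
      fix i assume i: "i \<in> {1..k}"
      have "poly B ((poly (L i) x + \<gamma> i) * poly (h i) (poly B x))
          = poly (h i) (poly B x) * poly B (poly (L i) x + \<gamma> i)"
        using Lsm[OF assms(6) hF[OF i, of x]] by (metis mult.commute)
      also have "\<dots> = poly (h i) (poly B x) * (poly (L i) (poly B x) + poly B (\<gamma> i))"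
        using Ladd[OF assms(6)] Lc[OF _ assms(6)] assms(5) i by simp
      finally show "poly B ((poly (L i) x + \<gamma> i) * poly (h i) (poly B x))
          = (poly (L i) (poly B x) + poly B (\<gamma> i)) * poly (h i) (poly B x)"
        by (simp add: mult.commute)
    qed
    finally show ?thesis .
  qed
  have key2: "poly F (x + z) = poly F x + D (poly B x) z" if "poly B z = 0" for x z
  proof -
    have Bxz: "poly B (x + z) = poly B x" using Ladd[OF assms(6)] that by simp
    have "poly F (x + z) = (\<Sum>i\<in>{1..k}. (poly (L i) x + \<gamma> i) * poly (h i) (poly B x)
                + poly (L i) z * poly (h i) (poly B x))"
      unfolding pF Bxz
    proof (rule sum.cong[OF refl])
      fix i assume "i \<in> {1..k}"
      hence "poly (L i) (x + z) = poly (L i) x + poly (L i) z" using Ladd assms(5) by blast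
      thus "(poly (L i) (x + z) + \<gamma> i) * poly (h i) (poly B x) =
        (poly (L i) x + \<gamma> i) * poly (h i) (poly B x) + poly (L i) z * poly (h i) (poly B x)"
        by (simp add: algebra_simps)
    qed
    thus ?thesis unfolding pF D_def sum.distrib by simp
  qed
  have Deq: "(\<Sum>i\<in>{1..k}. poly (L i) x * poly (h i) y) = D y x" for x y by (simp add: D_def)
  have finS: "finite S" by simp
  have GS: "poly G ` S \<subseteq> S" unfolding S_def using key1 by (auto simp flip: key1)
  have D0: "D y 0 = 0" for y unfolding D_def
  proof (intro sum.neutral ballI)
    fix i assume "i \<in> {1..k}"
    hence "poly (L i) 0 = 0" using Lz assms(5) by blast
    thus "poly (L i) 0 * poly (h i) y = 0" by simp
  qed
  have B0: "poly B 0 = 0" using Lz[OF assms(6)] .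
  show ?thesis
    unfolding F_def[symmetric] G_def[symmetric] S_def[symmetric] Deq
      permutation_polynomial_def permutes_set_def
  proof
    assume bij: "bij (poly F)"
    have "S \<subseteq> poly G ` S"
    proof
      fix s assume "s \<in> S"
      then obtain w where w: "s = poly B w" unfolding S_def by blast
      obtain x where "w = poly F x" using bij by (metis bij_pointE)
      hence "s = poly G (poly B x)" using w key1 by simp
      thus "s \<in> poly G ` S" unfolding S_def by blast
    qed
    hence "poly G ` S = S" using GS by blast
    hence b1: "bij_betw (poly G) S S"
      using finite_surj_inj[OF finS] \<open>S \<subseteq> poly G ` S\<close> by (simp add: bij_betw_def)
    have b2: "\<forall>y\<in>S. \<forall>x. (D y x = 0 \<and> poly B x = 0) = (x = 0)"
    proof (intro ballI allI iffI)
      fix y x assume y: "y \<in> S" and h: "D y x = 0 \<and> poly B x = 0"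
      obtain x0 where x0: "y = poly B x0" using y unfolding S_def by blast
      have "poly F (x0 + x) = poly F x0" using key2[of x x0] h x0 by simp
      hence "x0 + x = x0" using bij by (meson bij_def injD)
      thus "x = 0" by simp
    next
      fix y x :: 'a assume "x = 0"
      thus "D y x = 0 \<and> poly B x = 0" using D0 B0 by simp
    qed
    show "bij_betw (poly G) S S \<and> (\<forall>y\<in>S. \<forall>x. (D y x = 0 \<and> poly B x = 0) = (x = 0))"
      using b1 b2 by blast
  next
    assume h: "bij_betw (poly G) S S \<and> (\<forall>y\<in>S. \<forall>x. (D y x = 0 \<and> poly B x = 0) = (x = 0))"
    have "inj (poly F)"
    proof (rule injI)
      fix x x' assume eq: "poly F x = poly F x'"
      have "poly G (poly B x) = poly G (poly B x')" using key1 eq by metis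
      hence BB: "poly B x = poly B x'" using h unfolding bij_betw_def inj_on_def S_def by blast
      define z where "z = x' - x"
      have x': "x' = x + z" by (simp add: z_def)
      have Bz: "poly B z = 0" using BB Ladd[OF assms(6), of x z] x' by simp
      have "D (poly B x) z = 0" using key2[OF Bz, of x] eq x' by simp
      hence "z = 0" using h Bz unfolding S_def by blast
      thus "x = x'" using x' by simp
    qed
    thus "bij (poly F)" using finite_UNIV_inj_surj[of "poly F"] by (simp add: bij_def)
  qed
qed

end
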